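(* Let $X_1,X_2,\dots$ be i.i.d. exponential random variables with mean $1$, and for $\mu\in\mathbb N$, $t\ge0$ let $\kappa_\mu(t)=\max\{k\in\mathbb N:\sum_{j=1}^kX_j/\mu\le t\}$. Then: (a) there is a constant $C$ such that for all $\mu\in\mathbb N$ and all $0\le s\le t$, $$\frac1{\mu^2}\mathbb E\Big[|\kappa_\mu(t)-\kappa_\mu(s)|\sum_{k=\kappa_\mu(s)}^{\kappa_\mu(t)-1}X_{k+1}^2\Big]\le C\big(\sqrt{|t-s|}+|t-s|^2\big);$$ (b) for every $t\ge0$, $\lim_{\mu\to\infty}\mathbb E\big[\chi_{\{\kappa_\mu(t)\ge6\mu t\}}\kappa_\mu(t)^2\big]=0$. *)

theory Defs
  imports "HOL-Probability.Probability"
begin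

text \<open>kappa X mu t w = max { k :: nat. (sum_{j=1..k} X_j w) / mu <= t }.
  The set is finite almost surely; on the null event where it is infinite we set the value to 0.\<close>
definition kappa :: "(nat \<Rightarrow> 'a \<Rightarrow> real) \<Rightarrow> nat \<Rightarrow> real \<Rightarrow> 'a \<Rightarrow> nat" where
  "kappa X \<mu> t \<omega> =
     (let S = {k::nat. (\<Sum>j=1..k. X j \<omega>) / real \<mu> \<le> t} in if finite S then Max S else 0)"

end

theory Submission imports Defs begin


lemma ens_swap: "(\<Sum>k. \<Sum>j. f k j :: ennreal) = (\<Sum>j. \<Sum>k. f k j)"
proof -
  have "(\<Sum>k. \<Sum>j. f k j) = (\<integral>\<^sup>+k. (\<Sum>j. f k j) \<partial>count_space UNIV)"
    by (simp add: nn_integral_count_space_nat)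
  also have "\<dots> = (\<Sum>j. \<integral>\<^sup>+k. f k j \<partial>count_space UNIV)"
    by (rule nn_integral_suminf) auto
  also have "\<dots> = (\<Sum>j. \<Sum>k. f k j)"
    by (simp add: nn_integral_count_space_nat)
  finally show ?thesis .
qed

lemma ens_split: "(\<Sum>j. f j :: ennreal) = f k + (\<Sum>n. f (n + Suc k)) + (\<Sum>j<k. f j)"
proof -
  have "(\<Sum>j. f j) = (\<Sum>n. f (n + Suc k)) + (\<Sum>j<Suc k. f j)"
    by (rule suminf_offset[OF summableI])
  then show ?thesis by (simp add: ac_simps)
qed

lemma ens_le_suminf: "finite A \<Longrightarrow> (\<Sum>i\<in>A. f i :: ennreal) \<le> suminf f"
  by (intro sum_le_suminf summableI) auto

lemma ens_tri: "(\<Sum>k. \<Sum>j<k. f k j :: ennreal) = (\<Sum>j. \<Sum>n. f (n + Suc j) j)"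
proof -
  have "(\<Sum>k. \<Sum>j<k. f k j) = (\<Sum>k. \<Sum>j. if j < k then f k j else 0)"
  proof (intro suminf_cong)
    fix k
    show "(\<Sum>j<k. f k j) = (\<Sum>j. if j < k then f k j else 0)"
      by (subst suminf_finite[where N="{..<k}"]) auto
  qed
  also have "\<dots> = (\<Sum>j. \<Sum>k. if j < k then f k j else 0)" by (rule ens_swap)
  also have "\<dots> = (\<Sum>j. \<Sum>n. f (n + Suc j) j)"
  proof (rule suminf_cong)
    fix j
    have "(\<Sum>k. if j < k then f k j else 0) = (\<Sum>n. if j < n + Suc j then f (n + Suc j) j else 0) + (\<Sum>k<Suc j. if j < k then f k j else 0)"
      by (rule suminf_offset[OF summableI])
    then show "(\<Sum>k. if j < k then f k j else 0) = (\<Sum>n. f (n + Suc j) j)" by simp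
  qed
  finally show ?thesis .
qed


lemma arith8: "0 \<le> L \<Longrightarrow> 6 * ennreal L + 6 * ennreal L * ennreal L + ennreal L * ((1 + ennreal L) * 2) = ennreal (8*L + 8*L\<^sup>2)"
proof -
  assume L: "0 \<le> L"
  have "6 * ennreal L + 6 * ennreal L * ennreal L + ennreal L * ((1 + ennreal L) * 2) = ennreal (6*L + 6*L*L + L*((1+L)*2))"
    using L by (simp add: ennreal_plus ennreal_mult)
  also have "6*L + 6*L*L + L*((1+L)*2) = 8*L + 8*L\<^sup>2" by (simp add: algebra_simps power2_eq_square)
  finally show ?thesis .
qed

lemma ens_add3: "(\<Sum>k. f k + g k + h k :: ennreal) = (\<Sum>k. f k) + (\<Sum>k. g k) + (\<Sum>k. h k)"
  by (simp add: suminf_add[symmetric] summableI)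

lemma kappa_char:
  fixes X :: "nat \<Rightarrow> 'a \<Rightarrow> real"
  assumes nn: "\<forall>i. 1 \<le> i \<longrightarrow> 0 \<le> X i \<omega>" and mu: "0 < \<mu>"
    and fin: "finite {k::nat. (\<Sum>j=1..k. X j \<omega>) / real \<mu> \<le> t}" and t: "0 \<le> t"
  shows "(\<Sum>j=1..k. X j \<omega>) \<le> real \<mu> * t \<longleftrightarrow> k \<le> kappa X \<mu> t \<omega>"
proof -
  define T where "T = {k::nat. (\<Sum>j=1..k. X j \<omega>) / real \<mu> \<le> t}"
  have mu': "0 < real \<mu>" using mu by simp
  have Tiff: "k' \<in> T \<longleftrightarrow> (\<Sum>j=1..k'. X j \<omega>) \<le> real \<mu> * t" for k'
    using mu' by (simp add: T_def pos_divide_le_eq mult.commute)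
  have finT: "finite T" using fin by (simp add: T_def)
  have "0 \<in> T" using t by (simp add: T_def)
  then have ne: "T \<noteq> {}" by blast
  have K: "kappa X \<mu> t \<omega> = Max T" using fin by (simp add: kappa_def T_def Let_def)
  show ?thesis
  proof
    assume "(\<Sum>j=1..k. X j \<omega>) \<le> real \<mu> * t"
    then have "k \<in> T" by (simp add: Tiff)
    then show "k \<le> kappa X \<mu> t \<omega>" unfolding K using finT by (rule Max_ge[rotated])
  next
    assume kle: "k \<le> kappa X \<mu> t \<omega>"
    have "Max T \<in> T" using finT ne by (rule Max_in)
    then have h: "(\<Sum>j=1..Max T. X j \<omega>) \<le> real \<mu> * t" by (simp add: Tiff)
    have "(\<Sum>j=1..k. X j \<omega>) \<le> (\<Sum>j=1..Max T. X j \<omega>)"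
      using kle nn unfolding K by (intro sum_mono2) auto
    then show "(\<Sum>j=1..k. X j \<omega>) \<le> real \<mu> * t" using h by linarith
  qed
qed

lemma pw_a:
  fixes X :: "nat \<Rightarrow> 'a \<Rightarrow> real"
  assumes nn: "\<forall>i. 1 \<le> i \<longrightarrow> 0 \<le> X i \<omega>" and mu: "0 < \<mu>" and s: "0 \<le> s" "s \<le> t"
  shows "ennreal (\<bar>real (kappa X \<mu> t \<omega>) - real (kappa X \<mu> s \<omega>)\<bar> *
                  (\<Sum>k\<in>{kappa X \<mu> s \<omega>..<kappa X \<mu> t \<omega>}. (X (k + 1) \<omega>)\<^sup>2))
    \<le> (\<Sum>k. \<Sum>j. ennreal (indicator {(real \<mu> * s)<..(real \<mu> * t)} (\<Sum>i=1..Suc k. X i \<omega>) * indicator {(real \<mu> * s)<..(real \<mu> * t)} (\<Sum>i=1..Suc j. X i \<omega>) * (X (Suc k) \<omega>)\<^sup>2))"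
proof -
  define I where "I = {(real \<mu> * s)<..(real \<mu> * t)}"
  define F where "F k j = ennreal (indicator I (\<Sum>i=1..Suc k. X i \<omega>) * indicator I (\<Sum>i=1..Suc j. X i \<omega>) * (X (Suc k) \<omega>)\<^sup>2)" for k j
  define Kt where "Kt = kappa X \<mu> t \<omega>"
  define Ks where "Ks = kappa X \<mu> s \<omega>"
  define LHS where "LHS = ennreal (\<bar>real Kt - real Ks\<bar> * (\<Sum>k\<in>{Ks..<Kt}. (X (k + 1) \<omega>)\<^sup>2))"
  have "LHS \<le> (\<Sum>k. \<Sum>j. F k j)"
  proof (cases "finite {k::nat. (\<Sum>j=1..k. X j \<omega>) / real \<mu> \<le> t}")
    case False
    then have "Kt = 0" unfolding Kt_def kappa_def Let_def by simp
    then have "LHS = 0" by (simp add: LHS_def)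
    then show ?thesis by simp
  next
    case True
    have sub: "{k::nat. (\<Sum>j=1..k. X j \<omega>) / real \<mu> \<le> s} \<subseteq> {k::nat. (\<Sum>j=1..k. X j \<omega>) / real \<mu> \<le> t}"
      using s(2) by (auto intro: order.trans)
    have finS: "finite {k::nat. (\<Sum>j=1..k. X j \<omega>) / real \<mu> \<le> s}"
      by (rule finite_subset[OF sub True])
    have ct: "(\<Sum>j=1..k. X j \<omega>) \<le> real \<mu> * t \<longleftrightarrow> k \<le> Kt" for k
      unfolding Kt_def using kappa_char[where X=X and \<omega>=\<omega> and \<mu>=\<mu> and t=t, OF nn mu True] s by simp
    have cs: "(\<Sum>j=1..k. X j \<omega>) \<le> real \<mu> * s \<longleftrightarrow> k \<le> Ks" for k
      unfolding Ks_def using kappa_char[where X=X and \<omega>=\<omega> and \<mu>=\<mu> and t=s, OF nn mu finS] s by simp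
    have "Ks \<le> Kt"
    proof -
      have "(\<Sum>j=1..Ks. X j \<omega>) \<le> real \<mu> * s" by (simp only: cs order_refl)
      also have "\<dots> \<le> real \<mu> * t" using s by (intro mult_left_mono) auto
      finally show ?thesis by (simp only: ct)
    qed
    define R where "R = {Ks..<Kt}"
    have ind1: "indicator I (\<Sum>i=1..Suc k. X i \<omega>) = (1::real)" if "k \<in> R" for k
    proof -
      have "\<not> Suc k \<le> Ks" "Suc k \<le> Kt" using that by (auto simp: R_def)
      then have "\<not> (\<Sum>i=1..Suc k. X i \<omega>) \<le> real \<mu> * s" "(\<Sum>i=1..Suc k. X i \<omega>) \<le> real \<mu> * t"
        using cs[of "Suc k"] ct[of "Suc k"] by blast+
      then show ?thesis by (simp add: I_def)
    qed
    have FR: "F k j = ennreal ((X (Suc k) \<omega>)\<^sup>2)" if "k \<in> R" "j \<in> R" for k j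
      using that by (simp only: F_def ind1 mult_1_left)
    have "LHS = ennreal (real (card R) * (\<Sum>k\<in>R. (X (Suc k) \<omega>)\<^sup>2))"
      using \<open>Ks \<le> Kt\<close> by (simp add: LHS_def R_def)
    also have "\<dots> = ennreal (\<Sum>k\<in>R. \<Sum>j\<in>R. (X (Suc k) \<omega>)\<^sup>2)"
      by (simp add: sum_distrib_left)
    also have "\<dots> = (\<Sum>k\<in>R. \<Sum>j\<in>R. ennreal ((X (Suc k) \<omega>)\<^sup>2))"
    proof -
      have e1: "(\<Sum>j\<in>R. ennreal ((X (Suc k) \<omega>)\<^sup>2)) = ennreal (\<Sum>j\<in>R. (X (Suc k) \<omega>)\<^sup>2)" for k
        by (rule sum_ennreal) simp
      have e2: "(\<Sum>k\<in>R. ennreal (\<Sum>j\<in>R. (X (Suc k) \<omega>)\<^sup>2)) = ennreal (\<Sum>k\<in>R. \<Sum>j\<in>R. (X (Suc k) \<omega>)\<^sup>2)"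
        by (rule sum_ennreal) (simp add: sum_nonneg)
      show ?thesis by (simp only: e1 e2)
    qed
    also have "\<dots> = (\<Sum>k\<in>R. \<Sum>j\<in>R. F k j)"
      by (intro sum.cong refl) (simp add: FR)
    also have "\<dots> \<le> (\<Sum>k\<in>R. \<Sum>j. F k j)"
      by (intro sum_mono ens_le_suminf) (simp add: R_def)
    also have "\<dots> \<le> (\<Sum>k. \<Sum>j. F k j)"
      by (intro ens_le_suminf) (simp add: R_def)
    finally show ?thesis .
  qed
  then show ?thesis by (simp only: LHS_def F_def Kt_def Ks_def I_def Suc_eq_plus1)
qed

lemma pw_b:
  fixes X :: "nat \<Rightarrow> 'a \<Rightarrow> real"
  assumes nn: "\<forall>i. 1 \<le> i \<longrightarrow> 0 \<le> X i \<omega>" and mu: "0 < \<mu>" and t: "0 \<le> t"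
  shows "ennreal (indicator {\<omega>'. real (kappa X \<mu> t \<omega>') \<ge> 6 * real \<mu> * t} \<omega> * (real (kappa X \<mu> t \<omega>))\<^sup>2)
    \<le> (\<Sum>j. \<Sum>k. ennreal (indicator {..(real \<mu> * t)} (\<Sum>i=1..max (max (Suc j) (Suc k)) (nat \<lceil>6 * real \<mu> * t\<rceil>). X i \<omega>)))"
proof -
  define F where "F j k = ennreal (indicator {..(real \<mu> * t)} (\<Sum>i=1..max (max (Suc j) (Suc k)) (nat \<lceil>6 * real \<mu> * t\<rceil>). X i \<omega>))" for j k
  define N where "N = kappa X \<mu> t \<omega>"
  define LHS where "LHS = ennreal (indicator {\<omega>'. real (kappa X \<mu> t \<omega>') \<ge> 6 * real \<mu> * t} \<omega> * (real (kappa X \<mu> t \<omega>))\<^sup>2)"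
  have "LHS \<le> (\<Sum>j. \<Sum>k. F j k)"
  proof (cases "finite {k::nat. (\<Sum>j=1..k. X j \<omega>) / real \<mu> \<le> t} \<and> real N \<ge> 6 * real \<mu> * t")
    case False
    then consider "\<not> finite {k::nat. (\<Sum>j=1..k. X j \<omega>) / real \<mu> \<le> t}" | "\<not> real N \<ge> 6 * real \<mu> * t" by blast
    then have "LHS = 0"
    proof cases
      case 1
      then have "N = 0" unfolding N_def kappa_def Let_def by simp
      then show ?thesis by (simp add: LHS_def N_def)
    next
      case 2
      then show ?thesis by (simp add: LHS_def N_def)
    qed
    then show ?thesis by simp
  next
    case True
    define m where "m = nat \<lceil>6 * real \<mu> * t\<rceil>"
    have c: "(\<Sum>j=1..k. X j \<omega>) \<le> real \<mu> * t \<longleftrightarrow> k \<le> N" for k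
      unfolding N_def using kappa_char[where X=X and \<omega>=\<omega> and \<mu>=\<mu> and t=t, OF nn mu _ t] True by simp
    have "6 * real \<mu> * t \<le> real N" using True by simp
    then have "\<lceil>6 * real \<mu> * t\<rceil> \<le> int N" by (simp add: ceiling_le_iff)
    then have mN: "m \<le> N" unfolding m_def by linarith
    have F1: "F j k = 1" if "j < N" "k < N" for j k
    proof -
      have "max (max (Suc j) (Suc k)) m \<le> N" using that mN by simp
      then have "(\<Sum>i=1..max (max (Suc j) (Suc k)) m. X i \<omega>) \<le> real \<mu> * t" by (simp only: c)
      then show ?thesis by (simp add: F_def m_def)
    qed
    have "LHS = ennreal (real N * real N)"
      using True by (simp add: LHS_def N_def power2_eq_square)
    also have "\<dots> = (\<Sum>j<N. \<Sum>k<N. (1::ennreal))"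
      by (simp add: ennreal_of_nat_eq_real_of_nat ennreal_mult)
    also have "\<dots> = (\<Sum>j<N. \<Sum>k<N. F j k)"
      by (intro sum.cong refl) (simp add: F1)
    also have "\<dots> \<le> (\<Sum>j<N. \<Sum>k. F j k)"
      by (intro sum_mono ens_le_suminf) simp
    also have "\<dots> \<le> (\<Sum>j. \<Sum>k. F j k)"
      by (intro ens_le_suminf) simp
    finally show ?thesis .
  qed
  then show ?thesis by (simp only: LHS_def F_def)
qed


locale expseq = prob_space M for M :: "'a measure" +
  fixes X :: "nat \<Rightarrow> 'a \<Rightarrow> real"
  assumes ind: "indep_vars (\<lambda>_. borel) X {1..}"
  and dist: "\<And>i. i \<ge> 1 \<Longrightarrow> distributed M lborel (X i) (exponential_density 1)"
begin

definition B :: "nat \<Rightarrow> nat \<Rightarrow> 'a \<Rightarrow> real" where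
  "B r n \<omega> = (\<Sum>i\<in>{Suc r..r+n}. X i \<omega>)"

lemma measX: "i \<ge> 1 \<Longrightarrow> X i \<in> borel_measurable M"
  using dist distributed_measurable by fastforce

lemma measB: "B r n \<in> borel_measurable M"
  unfolding B_def by (intro borel_measurable_sum measX) auto

lemma AE_nonneg: "AE \<omega> in M. \<forall>i. 1 \<le> i \<longrightarrow> 0 \<le> X i \<omega>"
proof (subst AE_all_countable, intro allI)
  fix i :: nat
  show "AE \<omega> in M. 1 \<le> i \<longrightarrow> 0 \<le> X i \<omega>"
  proof (cases "1 \<le> i")
    case True
    have "AE x in distr M lborel (X i). 0 \<le> x"
      unfolding distributed_distr_eq_density[OF dist[OF True]]
      by (subst AE_density) (auto simp: erlang_density_def)
    from AE_distrD[OF _ this] measX[OF True] show ?thesis by auto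
  qed simp
qed

lemma distB: "n \<ge> 1 \<Longrightarrow> distributed M lborel (B r n) (erlang_density (n-1) 1)"
proof -
  assume n: "n \<ge> 1"
  have "distributed M lborel (\<lambda>x. \<Sum>i\<in>{Suc r..r+n}. X i x) (erlang_density (card {Suc r..r+n} - 1) 1)"
    by (rule exponential_distributed_sum) (use n in \<open>auto intro!: dist indep_vars_subset[OF ind]\<close>)
  then show ?thesis by (simp add: B_def[abs_def])
qed

lemma probB: "n \<ge> 1 \<Longrightarrow> J \<in> sets borel \<Longrightarrow>
   (\<integral>\<^sup>+\<omega>. indicator J (B r n \<omega>) \<partial>M) = (\<integral>\<^sup>+x. ennreal (erlang_density (n-1) 1 x) * indicator J x \<partial>lborel)"
  by (subst distributed_nn_integral[OF distB, symmetric]) auto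

lemma sum_erlang: "(\<Sum>n. ennreal (erlang_density n 1 x)) = indicator {0..} x"
proof (cases "x < 0")
  case True then show ?thesis by (simp add: erlang_density_def)
next
  case False
  have "(\<lambda>n. x^n /\<^sub>R fact n) sums exp x" by (rule exp_converges)
  then have "(\<lambda>n. exp (-x) * (x^n /\<^sub>R fact n)) sums (exp (-x) * exp x)" by (rule sums_mult)
  then have "(\<lambda>n. erlang_density n 1 x) sums 1"
    using False by (simp add: erlang_density_def exp_minus field_simps)
  then show ?thesis using False by (subst suminf_ennreal_eq) auto
qed

lemma renewal: "J \<in> sets borel \<Longrightarrow>
  (\<Sum>n. \<integral>\<^sup>+\<omega>. indicator J (B r (Suc n) \<omega>) \<partial>M) = emeasure lborel (J \<inter> {0..})"
proof -
  assume J: "J \<in> sets borel"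
  have "(\<Sum>n. \<integral>\<^sup>+\<omega>. indicator J (B r (Suc n) \<omega>) \<partial>M)
      = (\<Sum>n. \<integral>\<^sup>+x. ennreal (erlang_density n 1 x) * indicator J x \<partial>lborel)"
    using J by (simp add: probB)
  also have "\<dots> = (\<integral>\<^sup>+x. (\<Sum>n. ennreal (erlang_density n 1 x) * indicator J x) \<partial>lborel)"
    using J by (intro nn_integral_suminf[symmetric]) auto
  also have "\<dots> = (\<integral>\<^sup>+x. indicator (J \<inter> {0..}) x \<partial>lborel)"
    by (intro nn_integral_cong) (simp add: sum_erlang split: split_indicator)
  also have "\<dots> = emeasure lborel (J \<inter> {0..})" using J by simp
  finally show ?thesis .
qed

lemma moment2: "i \<ge> 1 \<Longrightarrow> (\<integral>\<^sup>+\<omega>. ennreal ((X i \<omega>)\<^sup>2) \<partial>M) = 2"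
proof -
  assume i: "i \<ge> 1"
  have "(\<integral>\<^sup>+\<omega>. ennreal ((X i \<omega>)\<^sup>2) \<partial>M) = (\<integral>\<^sup>+x. ennreal (erlang_density 0 1 x) * ennreal (x\<^sup>2) \<partial>lborel)"
    by (subst distributed_nn_integral[OF dist[OF i], symmetric]) auto
  also have "\<dots> = (\<integral>\<^sup>+x. ennreal (erlang_density 0 1 x * x^2) \<partial>lborel)"
    by (intro nn_integral_cong) (simp add: ennreal_mult)
  also have "\<dots> = 2" by (subst nn_integral_erlang_ith_moment) auto
  finally show ?thesis .
qed


lemma indep2:
  assumes AB: "A \<inter> C = {}" "A \<subseteq> {1..}" "C \<subseteq> {1..}"
    and f: "f \<in> borel_measurable (PiM A (\<lambda>_. borel))" and g: "g \<in> borel_measurable (PiM C (\<lambda>_. borel))"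
  shows "(\<integral>\<^sup>+\<omega>. ennreal (f (restrict (\<lambda>i. X i \<omega>) A)) * ennreal (g (restrict (\<lambda>i. X i \<omega>) C)) \<partial>M)
       = (\<integral>\<^sup>+\<omega>. ennreal (f (restrict (\<lambda>i. X i \<omega>) A)) \<partial>M) * (\<integral>\<^sup>+\<omega>. ennreal (g (restrict (\<lambda>i. X i \<omega>) C)) \<partial>M)"
proof -
  have f': "(\<lambda>y. ennreal (f y)) \<in> borel_measurable (PiM A (\<lambda>_. borel))" using f by measurable
  have g': "(\<lambda>y. ennreal (g y)) \<in> borel_measurable (PiM C (\<lambda>_. borel))" using g by measurable
  have iv: "indep_var borel ((\<lambda>y. ennreal (f y)) \<circ> (\<lambda>\<omega>. restrict (\<lambda>i. X i \<omega>) A)) borel ((\<lambda>y. ennreal (g y)) \<circ> (\<lambda>\<omega>. restrict (\<lambda>i. X i \<omega>) C))"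
    by (rule indep_var_compose[OF indep_var_restrict[OF ind AB] f' g'])
  define Z where "Z = case_bool ((\<lambda>y. ennreal (f y)) \<circ> (\<lambda>\<omega>. restrict (\<lambda>i. X i \<omega>) A)) ((\<lambda>y. ennreal (g y)) \<circ> (\<lambda>\<omega>. restrict (\<lambda>i. X i \<omega>) C))"
  have "indep_vars (case_bool borel borel) Z UNIV"
    using iv unfolding indep_var_def Z_def .
  then have iv2: "indep_vars (\<lambda>_. borel) Z UNIV"
    by (rule indep_vars_cong[THEN iffD1, rotated 3]) (auto split: bool.split)
  have "(\<integral>\<^sup>+\<omega>. (\<Prod>b\<in>UNIV. Z b \<omega>) \<partial>M) = (\<Prod>b\<in>UNIV. \<integral>\<^sup>+\<omega>. Z b \<omega> \<partial>M)"
    by (rule indep_vars_nn_integral[OF _ iv2]) auto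
  then show ?thesis by (simp add: UNIV_bool Z_def mult.commute comp_def)
qed


definition S :: "nat \<Rightarrow> 'a \<Rightarrow> real" where
  "S n \<omega> = (\<Sum>i\<in>{1..n}. X i \<omega>)"

lemma S_B: "S n = B 0 n"
  by (auto simp: S_def B_def fun_eq_iff)

lemma measS: "S n \<in> borel_measurable M"
  unfolding S_B by (rule measB)

lemma S_add: "S (r + n) \<omega> = S r \<omega> + B r n \<omega>"
  unfolding S_def B_def by (subst sum.ub_add_nat) auto

lemma B_Suc: "B r (Suc n) \<omega> = B r n \<omega> + X (r + Suc n) \<omega>"
  unfolding B_def by (simp add: sum.cl_ivl_Suc)

lemma B_0: "B r 0 \<omega> = 0"
  unfolding B_def by simp

lemma S_Suc: "S (Suc n) \<omega> = S n \<omega> + X (Suc n) \<omega>"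
  using S_add[of n 1] B_Suc[of n 0] B_0 by simp

lemma restr_sum: "(\<Sum>i\<in>A. restrict h A' i) = (\<Sum>i\<in>A. h i)" if "A \<subseteq> A'"
  using that by (intro sum.cong) auto


lemma dens_sq_le: "erlang_density 0 1 x * x\<^sup>2 \<le> 2"
proof (cases "x < 0")
  case False
  have "x\<^sup>2 / 2 \<le> exp x" using exp_lower_Taylor_quadratic[of x] False by simp
  then have "x\<^sup>2 \<le> 2 * exp x" by simp
  then have "exp (-x) * x\<^sup>2 \<le> exp (-x) * (2 * exp x)" by (intro mult_left_mono) auto
  also have "\<dots> = 2" by (simp add: exp_minus)
  finally show ?thesis using False by (simp add: erlang_density_def)
qed (simp add: erlang_density_def)

lemma U0: assumes "a \<le> b"
  shows "(\<integral>\<^sup>+\<omega>. ennreal (indicator {a<..b} (S (Suc 0) \<omega>) * (X (Suc 0) \<omega>)\<^sup>2) \<partial>M) \<le> 2 * ennreal (b - a)"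
proof -
  have "(\<integral>\<^sup>+\<omega>. ennreal (indicator {a<..b} (S (Suc 0) \<omega>) * (X (Suc 0) \<omega>)\<^sup>2) \<partial>M)
      = (\<integral>\<^sup>+\<omega>. ennreal (indicator {a<..b} (X (Suc 0) \<omega>) * (X (Suc 0) \<omega>)\<^sup>2) \<partial>M)"
    by (simp add: S_def)
  also have "\<dots> = (\<integral>\<^sup>+x. ennreal (erlang_density 0 1 x) * ennreal (indicator {a<..b} x * x\<^sup>2) \<partial>lborel)"
    by (subst distributed_nn_integral[OF dist[of "Suc 0"], symmetric]) auto
  also have "\<dots> \<le> (\<integral>\<^sup>+x. ennreal 2 * indicator {a<..b} x \<partial>lborel)"
  proof (intro nn_integral_mono)
    fix x
    have h: "erlang_density 0 1 x * (indicator {a<..b} x * x\<^sup>2) \<le> 2 * indicator {a<..b} x"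
      using dens_sq_le[of x] by (auto split: split_indicator)
    show "ennreal (erlang_density 0 1 x) * ennreal (indicator {a<..b} x * x\<^sup>2) \<le> ennreal 2 * indicator {a<..b} x"
      using ennreal_leI[OF h] by (simp add: ennreal_mult ennreal_indicator)
  qed
  also have "\<dots> = 2 * ennreal (b - a)"
    using assms by (subst nn_integral_cmult_indicator) auto
  finally show ?thesis .
qed


definition Vd :: "real \<Rightarrow> nat \<Rightarrow> ennreal" where
  "Vd L m = (\<integral>\<^sup>+x. ennreal (erlang_density 0 1 x) * ennreal (indicator {real m*L..<(real m+1)*L} x * x\<^sup>2) \<partial>lborel)"

definition Jd :: "real \<Rightarrow> real \<Rightarrow> nat \<Rightarrow> real set" where
  "Jd a b m = {a - (real m+1)*(b-a)<..b - real m*(b-a)}"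

lemma disc_bound:
  assumes y: "0 \<le> y" and ab: "a < b"
  shows "ennreal (indicator {a<..b} (s + y) * y\<^sup>2) \<le>
    (\<Sum>m. ennreal (indicator {real m*(b-a)..<(real m+1)*(b-a)} y * y\<^sup>2) * ennreal (indicator (Jd a b m) s))"
proof (cases "s + y \<in> {a<..b}")
  case False then show ?thesis by simp
next
  case True
  define L where "L = b - a"
  have L: "L > 0" using ab by (simp add: L_def)
  define m0 where "m0 = nat \<lfloor>y / L\<rfloor>"
  have m0: "real m0 = of_int \<lfloor>y / L\<rfloor>" using y L by (simp add: m0_def)
  have "real m0 \<le> y / L" "y / L < real m0 + 1" using m0 by linarith+
  then have lo: "real m0 * L \<le> y" and hi: "y < (real m0 + 1) * L" using L by (simp_all add: field_simps)
  have inJ: "s \<in> Jd a b m0" using True lo hi by (auto simp: Jd_def L_def algebra_simps)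
  have "ennreal (indicator {a<..b} (s + y) * y\<^sup>2) = ennreal (indicator {real m0*(b-a)..<(real m0+1)*(b-a)} y * y\<^sup>2) * ennreal (indicator (Jd a b m0) s)"
    using True inJ lo hi by (simp add: L_def)
  also have "\<dots> = (\<Sum>m\<in>{m0}. ennreal (indicator {real m*(b-a)..<(real m+1)*(b-a)} y * y\<^sup>2) * ennreal (indicator (Jd a b m) s))"
    by simp
  also have "\<dots> \<le> (\<Sum>m. ennreal (indicator {real m*(b-a)..<(real m+1)*(b-a)} y * y\<^sup>2) * ennreal (indicator (Jd a b m) s))"
    by (rule ens_le_suminf) simp
  finally show ?thesis .
qed

lemma Uk:
  assumes ab: "a < b"
  shows "(\<integral>\<^sup>+\<omega>. ennreal (indicator {a<..b} (S (Suc (Suc k)) \<omega>) * (X (Suc (Suc k)) \<omega>)\<^sup>2) \<partial>M)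
     \<le> (\<Sum>m. Vd (b-a) m * (\<integral>\<^sup>+\<omega>. indicator (Jd a b m) (S (Suc k) \<omega>) \<partial>M))"
proof -
  let ?G = "\<lambda>m y. indicator {real m*(b-a)..<(real m+1)*(b-a)} y * y\<^sup>2 :: real"
  have "(\<integral>\<^sup>+\<omega>. ennreal (indicator {a<..b} (S (Suc (Suc k)) \<omega>) * (X (Suc (Suc k)) \<omega>)\<^sup>2) \<partial>M)
     \<le> (\<integral>\<^sup>+\<omega>. (\<Sum>m. ennreal (?G m (X (Suc (Suc k)) \<omega>)) * ennreal (indicator (Jd a b m) (S (Suc k) \<omega>))) \<partial>M)"
  proof (intro nn_integral_mono_AE, use AE_nonneg in eventually_elim)
    case (elim \<omega>)
    then have "0 \<le> X (Suc (Suc k)) \<omega>" by simp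
    from disc_bound[OF this ab, of "S (Suc k) \<omega>"] show ?case by (simp add: S_Suc)
  qed
  also have "\<dots> = (\<Sum>m. \<integral>\<^sup>+\<omega>. ennreal (?G m (X (Suc (Suc k)) \<omega>)) * ennreal (indicator (Jd a b m) (S (Suc k) \<omega>)) \<partial>M)"
    using measX[of "Suc (Suc k)"] measS[of "Suc k"]
    by (intro nn_integral_suminf) (auto simp: Jd_def)
  also have "\<dots> = (\<Sum>m. Vd (b-a) m * (\<integral>\<^sup>+\<omega>. indicator (Jd a b m) (S (Suc k) \<omega>) \<partial>M))"
  proof (rule suminf_cong)
    fix m
    let ?A = "{1..Suc k}" and ?C = "{Suc (Suc k)}"
    let ?f = "\<lambda>y. indicator (Jd a b m) (\<Sum>i\<in>{1..Suc k}. y i) :: real"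
    let ?g = "\<lambda>y. ?G m (y (Suc (Suc k)))"
    have "(\<integral>\<^sup>+\<omega>. ennreal (?G m (X (Suc (Suc k)) \<omega>)) * ennreal (indicator (Jd a b m) (S (Suc k) \<omega>)) \<partial>M)
        = (\<integral>\<^sup>+\<omega>. ennreal (?f (restrict (\<lambda>i. X i \<omega>) ?A)) * ennreal (?g (restrict (\<lambda>i. X i \<omega>) ?C)) \<partial>M)"
      by (intro nn_integral_cong) (simp add: S_def mult.commute)
    also have "\<dots> = (\<integral>\<^sup>+\<omega>. ennreal (?f (restrict (\<lambda>i. X i \<omega>) ?A)) \<partial>M) * (\<integral>\<^sup>+\<omega>. ennreal (?g (restrict (\<lambda>i. X i \<omega>) ?C)) \<partial>M)"
      by (rule indep2) (auto simp: Jd_def)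
    also have "(\<integral>\<^sup>+\<omega>. ennreal (?f (restrict (\<lambda>i. X i \<omega>) ?A)) \<partial>M) = (\<integral>\<^sup>+\<omega>. indicator (Jd a b m) (S (Suc k) \<omega>) \<partial>M)"
      by (intro nn_integral_cong) (simp add: S_def ennreal_indicator)
    also have "(\<integral>\<^sup>+\<omega>. ennreal (?g (restrict (\<lambda>i. X i \<omega>) ?C)) \<partial>M) = Vd (b-a) m"
      unfolding Vd_def
      by (subst distributed_nn_integral[OF dist[of "Suc (Suc k)"]]) auto
    finally show "(\<integral>\<^sup>+\<omega>. ennreal (?G m (X (Suc (Suc k)) \<omega>)) * ennreal (indicator (Jd a b m) (S (Suc k) \<omega>)) \<partial>M)
        = Vd (b-a) m * (\<integral>\<^sup>+\<omega>. indicator (Jd a b m) (S (Suc k) \<omega>) \<partial>M)" by (simp add: mult.commute)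
  qed
  finally show ?thesis .
qed


lemma sumG: assumes L: "0 < L"
  shows "(\<Sum>m. ennreal (indicator {real m*L..<(real m+1)*L} x * x\<^sup>2)) \<le> ennreal (x\<^sup>2)"
proof (cases "x < 0")
  case True
  have "\<And>m. indicator {real m*L..<(real m+1)*L} x = (0::real)"
  proof -
    fix m
    have "0 \<le> real m * L" using L by simp
    then show "indicator {real m*L..<(real m+1)*L} x = (0::real)" using True by (simp add: indicator_def)
  qed
  then show ?thesis by simp
next
  case False
  define m0 where "m0 = nat \<lfloor>x / L\<rfloor>"
  have "\<And>m. m \<noteq> m0 \<Longrightarrow> indicator {real m*L..<(real m+1)*L} x = (0::real)"
  proof -
    fix m assume "m \<noteq> m0"
    show "indicator {real m*L..<(real m+1)*L} x = (0::real)"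
    proof (rule ccontr)
      assume "indicator {real m*L..<(real m+1)*L} x \<noteq> (0::real)"
      then have "real m * L \<le> x" "x < (real m + 1) * L" by (auto split: split_indicator_asm)
      then have "real m \<le> x / L" "x / L < real m + 1" using L by (simp_all add: field_simps)
      then have "\<lfloor>x / L\<rfloor> = int m" by (simp add: floor_eq_iff)
      then show False using \<open>m \<noteq> m0\<close> by (simp add: m0_def)
    qed
  qed
  then have eqF: "(\<lambda>m. ennreal (indicator {real m*L..<(real m+1)*L} x * x\<^sup>2)) = (\<lambda>m. if m = m0 then ennreal (indicator {real m*L..<(real m+1)*L} x * x\<^sup>2) else 0)"
    by (auto simp: fun_eq_iff)
  have "(\<Sum>m. ennreal (indicator {real m*L..<(real m+1)*L} x * x\<^sup>2)) = ennreal (indicator {real m0*L..<(real m0+1)*L} x * x\<^sup>2)"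
    by (subst eqF) (rule sums_unique[symmetric, OF sums_single])
  also have "\<dots> \<le> ennreal (x\<^sup>2)" by (intro ennreal_leI) (auto split: split_indicator)
  finally show ?thesis .
qed

lemma sumV: assumes L: "0 < L" shows "(\<Sum>m. Vd L m) \<le> 2"
proof -
  have "(\<Sum>m. Vd L m) = (\<integral>\<^sup>+x. (\<Sum>m. ennreal (erlang_density 0 1 x) * ennreal (indicator {real m*L..<(real m+1)*L} x * x\<^sup>2)) \<partial>lborel)"
    unfolding Vd_def by (rule nn_integral_suminf[symmetric]) measurable
  also have "\<dots> \<le> (\<integral>\<^sup>+x. ennreal (erlang_density 0 1 x) * ennreal (x\<^sup>2) \<partial>lborel)"
  proof (rule nn_integral_mono)
    fix x
    have "(\<Sum>m. ennreal (erlang_density 0 1 x) * ennreal (indicator {real m*L..<(real m+1)*L} x * x\<^sup>2))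
       = ennreal (erlang_density 0 1 x) * (\<Sum>m. ennreal (indicator {real m*L..<(real m+1)*L} x * x\<^sup>2))"
      by (rule ennreal_suminf_cmult)
    also have "\<dots> \<le> ennreal (erlang_density 0 1 x) * ennreal (x\<^sup>2)"
      by (rule mult_left_mono[OF sumG[OF L]]) simp
    finally show "(\<Sum>m. ennreal (erlang_density 0 1 x) * ennreal (indicator {real m*L..<(real m+1)*L} x * x\<^sup>2))
       \<le> ennreal (erlang_density 0 1 x) * ennreal (x\<^sup>2)" .
  qed
  also have "\<dots> = (\<integral>\<^sup>+x. ennreal (erlang_density 0 1 x * x^2) \<partial>lborel)"
    by (intro nn_integral_cong) (simp add: ennreal_mult)
  also have "\<dots> = 2" by (subst nn_integral_erlang_ith_moment) auto
  finally show ?thesis .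
qed

lemma sumU: assumes ab: "0 \<le> a" "a < b"
  shows "(\<Sum>k. \<integral>\<^sup>+\<omega>. ennreal (indicator {a<..b} (S (Suc k) \<omega>) * (X (Suc k) \<omega>)\<^sup>2) \<partial>M) \<le> 6 * ennreal (b - a)"
proof -
  let ?U = "\<lambda>k. \<integral>\<^sup>+\<omega>. ennreal (indicator {a<..b} (S (Suc k) \<omega>) * (X (Suc k) \<omega>)\<^sup>2) \<partial>M"
  let ?P = "\<lambda>m k. \<integral>\<^sup>+\<omega>. indicator (Jd a b m) (S (Suc k) \<omega>) \<partial>M"
  have "(\<Sum>n. ?U (Suc n)) \<le> (\<Sum>n. \<Sum>m. Vd (b-a) m * ?P m n)"
    by (intro suminf_le Uk ab summableI)
  also have "\<dots> = (\<Sum>m. \<Sum>n. Vd (b-a) m * ?P m n)" by (rule ens_swap)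
  also have "\<dots> = (\<Sum>m. Vd (b-a) m * emeasure lborel (Jd a b m \<inter> {0..}))"
  proof (rule suminf_cong)
    fix m
    have "(\<Sum>n. Vd (b-a) m * ?P m n) = Vd (b-a) m * (\<Sum>n. ?P m n)" by (rule ennreal_suminf_cmult)
    also have "(\<Sum>n. ?P m n) = (\<Sum>n. \<integral>\<^sup>+\<omega>. indicator (Jd a b m) (B 0 (Suc n) \<omega>) \<partial>M)"
      by (simp add: S_B)
    also have "\<dots> = emeasure lborel (Jd a b m \<inter> {0..})" by (rule renewal) (simp add: Jd_def)
    finally show "(\<Sum>n. Vd (b-a) m * ?P m n) = Vd (b-a) m * emeasure lborel (Jd a b m \<inter> {0..})" .
  qed
  also have "\<dots> \<le> (\<Sum>m. Vd (b-a) m * (2 * ennreal (b - a)))"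
  proof (intro suminf_le summableI mult_left_mono)
    fix m
    have "emeasure lborel (Jd a b m \<inter> {0..}) \<le> emeasure lborel (Jd a b m)"
      by (intro emeasure_mono) (auto simp: Jd_def)
    also have "\<dots> = ennreal (2 * (b - a))" using ab
      by (simp add: Jd_def algebra_simps)
    also have "\<dots> = 2 * ennreal (b - a)" using ab by (subst ennreal_mult) auto
    finally show "emeasure lborel (Jd a b m \<inter> {0..}) \<le> 2 * ennreal (b - a)" .
  qed auto
  also have "\<dots> = (\<Sum>m. Vd (b-a) m) * (2 * ennreal (b - a))" by simp
  also have "\<dots> \<le> 2 * (2 * ennreal (b - a))"
    using ab by (intro mult_right_mono sumV) auto
  finally have 1: "(\<Sum>n. ?U (Suc n)) \<le> 4 * ennreal (b - a)" by (simp add: mult.assoc[symmetric])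
  have "(\<Sum>k. ?U k) = ?U 0 + (\<Sum>n. ?U (n + Suc 0)) + (\<Sum>j<0. ?U j)" by (rule ens_split)
  also have "\<dots> \<le> 2 * ennreal (b - a) + 4 * ennreal (b - a)"
    using U0[of a b] ab 1 by (auto intro: add_mono)
  also have "\<dots> = 6 * ennreal (b - a)" by (simp add: distrib_right[symmetric])
  finally show ?thesis .
qed


lemma upper_term:
  assumes ab: "a \<le> b"
  shows "(\<integral>\<^sup>+\<omega>. ennreal (indicator {a<..b} (S (Suc k) \<omega>) * indicator {a<..b} (S (Suc (n + Suc k)) \<omega>) * (X (Suc k) \<omega>)\<^sup>2) \<partial>M)
    \<le> (\<integral>\<^sup>+\<omega>. ennreal (indicator {a<..b} (S (Suc k) \<omega>) * (X (Suc k) \<omega>)\<^sup>2) \<partial>M) * (\<integral>\<^sup>+\<omega>. indicator {..b-a} (B (Suc k) (Suc n) \<omega>) \<partial>M)"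
proof -
  let ?A = "{1..Suc k}" and ?C = "{Suc (Suc k)..Suc k + Suc n}"
  let ?f = "\<lambda>y. indicator {a<..b} (\<Sum>i\<in>{1..Suc k}. y i) * (y (Suc k))\<^sup>2 :: real"
  let ?g = "\<lambda>y. indicator {..b-a} (\<Sum>i\<in>{Suc (Suc k)..Suc k + Suc n}. y i) :: real"
  have "(\<integral>\<^sup>+\<omega>. ennreal (indicator {a<..b} (S (Suc k) \<omega>) * indicator {a<..b} (S (Suc (n + Suc k)) \<omega>) * (X (Suc k) \<omega>)\<^sup>2) \<partial>M)
     \<le> (\<integral>\<^sup>+\<omega>. ennreal (?f (restrict (\<lambda>i. X i \<omega>) ?A)) * ennreal (?g (restrict (\<lambda>i. X i \<omega>) ?C)) \<partial>M)"
  proof (intro nn_integral_mono)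
    fix \<omega>
    have eq: "S (Suc (n + Suc k)) \<omega> = S (Suc k) \<omega> + B (Suc k) (Suc n) \<omega>"
      using S_add[of "Suc k" "Suc n" \<omega>] by (simp add: add.commute)
    have "indicator {a<..b} (S (Suc k) \<omega>) * indicator {a<..b} (S (Suc (n + Suc k)) \<omega>) * (X (Suc k) \<omega>)\<^sup>2
       \<le> ?f (restrict (\<lambda>i. X i \<omega>) ?A) * ?g (restrict (\<lambda>i. X i \<omega>) ?C)"
      unfolding eq by (auto simp: S_def B_def split: split_indicator)
    then show "ennreal (indicator {a<..b} (S (Suc k) \<omega>) * indicator {a<..b} (S (Suc (n + Suc k)) \<omega>) * (X (Suc k) \<omega>)\<^sup>2)
       \<le> ennreal (?f (restrict (\<lambda>i. X i \<omega>) ?A)) * ennreal (?g (restrict (\<lambda>i. X i \<omega>) ?C))"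
      by (subst ennreal_mult[symmetric]) (auto intro: ennreal_leI)
  qed
  also have "\<dots> = (\<integral>\<^sup>+\<omega>. ennreal (?f (restrict (\<lambda>i. X i \<omega>) ?A)) \<partial>M) * (\<integral>\<^sup>+\<omega>. ennreal (?g (restrict (\<lambda>i. X i \<omega>) ?C)) \<partial>M)"
  proof -
    have mf: "?f \<in> borel_measurable (PiM ?A (\<lambda>_. borel))" by measurable
    have mg: "?g \<in> borel_measurable (PiM ?C (\<lambda>_. borel))" by measurable
    show ?thesis by (rule indep2[OF _ _ _ mf mg]) auto
  qed
  also have "(\<integral>\<^sup>+\<omega>. ennreal (?f (restrict (\<lambda>i. X i \<omega>) ?A)) \<partial>M) = (\<integral>\<^sup>+\<omega>. ennreal (indicator {a<..b} (S (Suc k) \<omega>) * (X (Suc k) \<omega>)\<^sup>2) \<partial>M)"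
    by (intro nn_integral_cong) (simp add: S_def)
  also have "(\<integral>\<^sup>+\<omega>. ennreal (?g (restrict (\<lambda>i. X i \<omega>) ?C)) \<partial>M) = (\<integral>\<^sup>+\<omega>. indicator {..b-a} (B (Suc k) (Suc n) \<omega>) \<partial>M)"
    by (intro nn_integral_cong) (simp add: B_def ennreal_indicator)
  finally show ?thesis .
qed

lemma lower_term:
  assumes ab: "a \<le> b"
  shows "(\<integral>\<^sup>+\<omega>. ennreal (indicator {a<..b} (S (Suc (n + Suc j)) \<omega>) * indicator {a<..b} (S (Suc j) \<omega>) * (X (Suc (n + Suc j)) \<omega>)\<^sup>2) \<partial>M)
    \<le> (\<integral>\<^sup>+\<omega>. indicator {a<..b} (S (Suc j) \<omega>) \<partial>M) * ((\<integral>\<^sup>+\<omega>. indicator {..b-a} (B (Suc j) n \<omega>) \<partial>M) * 2)"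
proof -
  let ?A = "{1..Suc j}" and ?C = "{Suc (Suc j)..Suc j + Suc n}"
  let ?f = "\<lambda>y. indicator {a<..b} (\<Sum>i\<in>{1..Suc j}. y i) :: real"
  let ?g = "\<lambda>y. indicator {..b-a} (\<Sum>i\<in>{Suc (Suc j)..Suc j + n}. y i) * (y (Suc j + Suc n))\<^sup>2 :: real"
  have "(\<integral>\<^sup>+\<omega>. ennreal (indicator {a<..b} (S (Suc (n + Suc j)) \<omega>) * indicator {a<..b} (S (Suc j) \<omega>) * (X (Suc (n + Suc j)) \<omega>)\<^sup>2) \<partial>M)
     \<le> (\<integral>\<^sup>+\<omega>. ennreal (?f (restrict (\<lambda>i. X i \<omega>) ?A)) * ennreal (?g (restrict (\<lambda>i. X i \<omega>) ?C)) \<partial>M)"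
  proof (intro nn_integral_mono_AE, use AE_nonneg in eventually_elim)
    case (elim \<omega>)
    have eq: "S (Suc (n + Suc j)) \<omega> = S (Suc j) \<omega> + B (Suc j) n \<omega> + X (Suc j + Suc n) \<omega>"
      using S_add[of "Suc j" "Suc n" \<omega>] B_Suc[of "Suc j" n \<omega>] by (simp add: add.commute)
    have x0: "0 \<le> X (Suc j + Suc n) \<omega>" using elim by simp
    have "indicator {a<..b} (S (Suc (n + Suc j)) \<omega>) * indicator {a<..b} (S (Suc j) \<omega>) * (X (Suc (n + Suc j)) \<omega>)\<^sup>2
       \<le> ?f (restrict (\<lambda>i. X i \<omega>) ?A) * ?g (restrict (\<lambda>i. X i \<omega>) ?C)"
      unfolding eq using x0 by (auto simp: S_def B_def add.commute split: split_indicator)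
    then show ?case
      by (subst ennreal_mult[symmetric]) (auto intro: ennreal_leI)
  qed
  also have "\<dots> = (\<integral>\<^sup>+\<omega>. ennreal (?f (restrict (\<lambda>i. X i \<omega>) ?A)) \<partial>M) * (\<integral>\<^sup>+\<omega>. ennreal (?g (restrict (\<lambda>i. X i \<omega>) ?C)) \<partial>M)"
  proof -
    have mf: "?f \<in> borel_measurable (PiM ?A (\<lambda>_. borel))" by measurable
    have mg: "?g \<in> borel_measurable (PiM ?C (\<lambda>_. borel))" by measurable
    show ?thesis by (rule indep2[OF _ _ _ mf mg]) auto
  qed
  also have "(\<integral>\<^sup>+\<omega>. ennreal (?f (restrict (\<lambda>i. X i \<omega>) ?A)) \<partial>M) = (\<integral>\<^sup>+\<omega>. indicator {a<..b} (S (Suc j) \<omega>) \<partial>M)"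
    by (intro nn_integral_cong) (simp add: S_def ennreal_indicator)
  also have "(\<integral>\<^sup>+\<omega>. ennreal (?g (restrict (\<lambda>i. X i \<omega>) ?C)) \<partial>M) = (\<integral>\<^sup>+\<omega>. indicator {..b-a} (B (Suc j) n \<omega>) \<partial>M) * 2"
  proof -
    let ?A2 = "{Suc (Suc j)..Suc j + n}" and ?C2 = "{Suc j + Suc n}"
    let ?f2 = "\<lambda>y. indicator {..b-a} (\<Sum>i\<in>{Suc (Suc j)..Suc j + n}. y i) :: real"
    let ?g2 = "\<lambda>y. (y (Suc j + Suc n))\<^sup>2 :: real"
    have "(\<integral>\<^sup>+\<omega>. ennreal (?g (restrict (\<lambda>i. X i \<omega>) ?C)) \<partial>M)
      = (\<integral>\<^sup>+\<omega>. ennreal (?f2 (restrict (\<lambda>i. X i \<omega>) ?A2)) * ennreal (?g2 (restrict (\<lambda>i. X i \<omega>) ?C2)) \<partial>M)"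
      by (intro nn_integral_cong) (simp add: ennreal_mult)
    also have "\<dots> = (\<integral>\<^sup>+\<omega>. ennreal (?f2 (restrict (\<lambda>i. X i \<omega>) ?A2)) \<partial>M) * (\<integral>\<^sup>+\<omega>. ennreal (?g2 (restrict (\<lambda>i. X i \<omega>) ?C2)) \<partial>M)"
    proof -
      have mf: "?f2 \<in> borel_measurable (PiM ?A2 (\<lambda>_. borel))" by measurable
      have mg: "?g2 \<in> borel_measurable (PiM ?C2 (\<lambda>_. borel))" by measurable
      show ?thesis by (rule indep2[OF _ _ _ mf mg]) auto
    qed
    also have "(\<integral>\<^sup>+\<omega>. ennreal (?f2 (restrict (\<lambda>i. X i \<omega>) ?A2)) \<partial>M) = (\<integral>\<^sup>+\<omega>. indicator {..b-a} (B (Suc j) n \<omega>) \<partial>M)"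
      by (intro nn_integral_cong) (simp add: B_def ennreal_indicator)
    also have "(\<integral>\<^sup>+\<omega>. ennreal (?g2 (restrict (\<lambda>i. X i \<omega>) ?C2)) \<partial>M) = 2"
      using moment2[of "Suc j + Suc n"] by simp
    finally show ?thesis .
  qed
  finally show ?thesis by (simp add: mult.assoc)
qed


lemma main_a:
  assumes ab: "0 \<le> a" "a < b"
  shows "(\<Sum>k. \<Sum>j. \<integral>\<^sup>+\<omega>. ennreal (indicator {a<..b} (S (Suc k) \<omega>) * indicator {a<..b} (S (Suc j) \<omega>) * (X (Suc k) \<omega>)\<^sup>2) \<partial>M)
     \<le> ennreal (8*(b-a) + 8*(b-a)\<^sup>2)"
proof -
  define E where "E k j = (\<integral>\<^sup>+\<omega>. ennreal (indicator {a<..b} (S (Suc k) \<omega>) * indicator {a<..b} (S (Suc j) \<omega>) * (X (Suc k) \<omega>)\<^sup>2) \<partial>M)" for k j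
  define U where "U k = (\<integral>\<^sup>+\<omega>. ennreal (indicator {a<..b} (S (Suc k) \<omega>) * (X (Suc k) \<omega>)\<^sup>2) \<partial>M)" for k
  define L where "L = b - a"
  have L: "0 \<le> L" using ab by (simp add: L_def)
  have J0: "{..b-a} \<inter> {0..} = {0..b-a}" by auto
  have dec: "(\<Sum>k. \<Sum>j. E k j) = (\<Sum>k. E k k) + (\<Sum>k. \<Sum>n. E k (n + Suc k)) + (\<Sum>k. \<Sum>j<k. E k j)"
  proof -
    have "(\<Sum>k. \<Sum>j. E k j) = (\<Sum>k. E k k + (\<Sum>n. E k (n + Suc k)) + (\<Sum>j<k. E k j))"
      by (intro suminf_cong ens_split)
    also have "\<dots> = (\<Sum>k. E k k) + (\<Sum>k. \<Sum>n. E k (n + Suc k)) + (\<Sum>k. \<Sum>j<k. E k j)"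
      by (rule ens_add3)
    finally show ?thesis .
  qed
  have diag: "(\<Sum>k. E k k) = (\<Sum>k. U k)"
    unfolding E_def U_def
    by (intro suminf_cong nn_integral_cong) (simp split: split_indicator)
  have up: "(\<Sum>k. \<Sum>n. E k (n + Suc k)) \<le> (\<Sum>k. U k) * ennreal L"
  proof -
    have "(\<Sum>k. \<Sum>n. E k (n + Suc k)) \<le> (\<Sum>k. U k * ennreal L)"
    proof (intro suminf_le summableI)
      fix k
      have "(\<Sum>n. E k (n + Suc k)) \<le> (\<Sum>n. U k * (\<integral>\<^sup>+\<omega>. indicator {..b-a} (B (Suc k) (Suc n) \<omega>) \<partial>M))"
        unfolding E_def U_def using ab by (intro suminf_le summableI upper_term) auto
      also have "\<dots> = U k * (\<Sum>n. \<integral>\<^sup>+\<omega>. indicator {..b-a} (B (Suc k) (Suc n) \<omega>) \<partial>M)"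
        by (rule ennreal_suminf_cmult)
      also have "(\<Sum>n. \<integral>\<^sup>+\<omega>. indicator {..b-a} (B (Suc k) (Suc n) \<omega>) \<partial>M) = ennreal L"
        by (subst renewal) (use ab in \<open>auto simp: J0 L_def\<close>)
      finally show "(\<Sum>n. E k (n + Suc k)) \<le> U k * ennreal L" .
    qed
    then show ?thesis by simp
  qed
  have Psum: "(\<Sum>j. \<integral>\<^sup>+\<omega>. indicator {a<..b} (S (Suc j) \<omega>) \<partial>M) \<le> ennreal L"
  proof -
    have "(\<Sum>j. \<integral>\<^sup>+\<omega>. indicator {a<..b} (S (Suc j) \<omega>) \<partial>M) = emeasure lborel ({a<..b} \<inter> {0..})"
      unfolding S_B by (rule renewal) simp
    also have "\<dots> \<le> emeasure lborel {a<..b}" by (intro emeasure_mono) auto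
    also have "\<dots> = ennreal L" using ab by (simp add: L_def)
    finally show ?thesis .
  qed
  have low: "(\<Sum>k. \<Sum>j<k. E k j) \<le> ennreal L * ((1 + ennreal L) * 2)"
  proof -
    have "(\<Sum>k. \<Sum>j<k. E k j) = (\<Sum>j. \<Sum>n. E (n + Suc j) j)" by (rule ens_tri)
    also have "\<dots> \<le> (\<Sum>j. (\<integral>\<^sup>+\<omega>. indicator {a<..b} (S (Suc j) \<omega>) \<partial>M) * ((1 + ennreal L) * 2))"
    proof (intro suminf_le summableI)
      fix j
      let ?Q = "\<lambda>n. \<integral>\<^sup>+\<omega>. indicator {..b-a} (B (Suc j) n \<omega>) \<partial>M"
      let ?P = "\<integral>\<^sup>+\<omega>. indicator {a<..b} (S (Suc j) \<omega>) \<partial>M"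
      have q0: "?Q 0 = 1"
        using ab by (simp add: B_0 emeasure_space_1)
      have q1: "(\<Sum>n. ?Q (n + Suc 0)) = ennreal L"
        by (simp, subst renewal) (use ab in \<open>auto simp: J0 L_def\<close>)
      have qs: "(\<Sum>n. ?Q n) = 1 + ennreal L"
        using ens_split[of ?Q 0] q0 q1 by simp
      have "(\<Sum>n. E (n + Suc j) j) \<le> (\<Sum>n. ?P * (?Q n * 2))"
        unfolding E_def using ab by (intro suminf_le summableI lower_term) auto
      also have "\<dots> = ?P * ((\<Sum>n. ?Q n) * 2)" by simp
      finally show "(\<Sum>n. E (n + Suc j) j) \<le> ?P * ((1 + ennreal L) * 2)" by (simp add: qs)
    qed
    also have "\<dots> = (\<Sum>j. \<integral>\<^sup>+\<omega>. indicator {a<..b} (S (Suc j) \<omega>) \<partial>M) * ((1 + ennreal L) * 2)" by simp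
    also have "\<dots> \<le> ennreal L * ((1 + ennreal L) * 2)"
      by (rule mult_right_mono[OF Psum]) simp
    finally show ?thesis .
  qed
  have "(\<Sum>k. \<Sum>j. E k j) \<le> (\<Sum>k. U k) + (\<Sum>k. U k) * ennreal L + ennreal L * ((1 + ennreal L) * 2)"
    unfolding dec diag using up low by (intro add_mono) auto
  also have "\<dots> \<le> 6 * ennreal L + 6 * ennreal L * ennreal L + ennreal L * ((1 + ennreal L) * 2)"
    using sumU[OF ab] unfolding U_def L_def by (intro add_mono mult_right_mono) auto
  also have "\<dots> = ennreal (8*(b-a) + 8*(b-a)\<^sup>2)" using arith8[OF L] by (simp add: L_def)
  finally show ?thesis unfolding E_def .
qed


lemma half_int: "(\<integral>\<^sup>+\<omega>. ennreal (exp (- X i \<omega>)) \<partial>M) = ennreal (1/2)" if i: "1 \<le> i"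
proof -
  have "(\<integral>\<^sup>+\<omega>. ennreal (exp (- X i \<omega>)) \<partial>M) = (\<integral>\<^sup>+x. ennreal (erlang_density 0 1 x) * ennreal (exp (- x)) \<partial>lborel)"
    by (subst distributed_nn_integral[OF dist[OF i], symmetric]) auto
  also have "\<dots> = (\<integral>\<^sup>+x. ennreal (1/2) * ennreal (erlang_density 0 2 x * x ^ 0) \<partial>lborel)"
  proof (intro nn_integral_cong)
    fix x :: real
    have h: "erlang_density 0 1 x * exp (- x) = 1/2 * (erlang_density 0 2 x * x ^ 0)"
      by (simp add: erlang_density_def exp_add[symmetric])
    have "ennreal (erlang_density 0 1 x) * ennreal (exp (- x)) = ennreal (erlang_density 0 1 x * exp (- x))"
      by (rule ennreal_mult[symmetric]) auto
    also have "\<dots> = ennreal (1/2 * (erlang_density 0 2 x * x ^ 0))" by (simp only: h)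
    also have "\<dots> = ennreal (1/2) * ennreal (erlang_density 0 2 x * x ^ 0)" by (rule ennreal_mult) auto
    finally show "ennreal (erlang_density 0 1 x) * ennreal (exp (- x)) = ennreal (1/2) * ennreal (erlang_density 0 2 x * x ^ 0)" .
  qed
  also have "\<dots> = ennreal (1/2) * (\<integral>\<^sup>+x. ennreal (erlang_density 0 2 x * x ^ 0) \<partial>lborel)"
    by (rule nn_integral_cmult) measurable
  also have "(\<integral>\<^sup>+x. ennreal (erlang_density 0 2 x * x ^ 0) \<partial>lborel) = 1"
    by (subst nn_integral_erlang_ith_moment) auto
  finally show ?thesis by simp
qed

lemma chernoff: "(\<integral>\<^sup>+\<omega>. indicator {..c} (S n \<omega>) \<partial>M) \<le> ennreal (exp c * (1/2)^n)"
proof -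
  have iv: "indep_vars (\<lambda>_. borel) (\<lambda>i \<omega>. ennreal (exp (- X i \<omega>))) {1..n}"
    by (rule indep_vars_compose2[OF indep_vars_subset[OF ind]]) auto
  have "(\<integral>\<^sup>+\<omega>. indicator {..c} (S n \<omega>) \<partial>M) \<le> (\<integral>\<^sup>+\<omega>. ennreal (exp c) * (\<Prod>i\<in>{1..n}. ennreal (exp (- X i \<omega>))) \<partial>M)"
  proof (intro nn_integral_mono)
    fix \<omega>
    have "(\<Prod>i\<in>{1..n}. ennreal (exp (- X i \<omega>))) = ennreal (\<Prod>i\<in>{1..n}. exp (- X i \<omega>))"
      by (simp add: prod_ennreal)
    also have "(\<Prod>i\<in>{1..n}. exp (- X i \<omega>)) = exp (- S n \<omega>)"
      by (simp add: S_def exp_sum[symmetric] sum_negf)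
    finally have p: "(\<Prod>i\<in>{1..n}. ennreal (exp (- X i \<omega>))) = ennreal (exp (- S n \<omega>))" .
    have "indicator {..c} (S n \<omega>) \<le> exp c * exp (- S n \<omega>)"
      by (auto split: split_indicator simp: exp_add[symmetric])
    then have "ennreal (indicator {..c} (S n \<omega>)) \<le> ennreal (exp c * exp (- S n \<omega>))" by (rule ennreal_leI)
    then show "indicator {..c} (S n \<omega>) \<le> ennreal (exp c) * (\<Prod>i\<in>{1..n}. ennreal (exp (- X i \<omega>)))"
      unfolding p by (simp add: ennreal_mult ennreal_indicator)
  qed
  also have "\<dots> = ennreal (exp c) * (\<integral>\<^sup>+\<omega>. (\<Prod>i\<in>{1..n}. ennreal (exp (- X i \<omega>))) \<partial>M)"
    by (rule nn_integral_cmult) (use measX in auto)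
  also have "(\<integral>\<^sup>+\<omega>. (\<Prod>i\<in>{1..n}. ennreal (exp (- X i \<omega>))) \<partial>M) = (\<Prod>i\<in>{1..n}. \<integral>\<^sup>+\<omega>. ennreal (exp (- X i \<omega>)) \<partial>M)"
    by (rule indep_vars_nn_integral[OF _ iv]) auto
  also have "\<dots> = (\<Prod>i\<in>{1..n}. ennreal (1/2))"
    by (intro prod.cong refl half_int) auto
  also have "\<dots> = ennreal (1/2) ^ n" by (simp only: prod_constant card_atLeastAtMost diff_Suc_1)
  also have "\<dots> = ennreal ((1/2)^n)" by (rule ennreal_power) simp
  finally show ?thesis by (simp add: ennreal_mult)
qed

lemma probS0: "1 \<le> n \<Longrightarrow> (\<integral>\<^sup>+\<omega>. indicator {..0} (S n \<omega>) \<partial>M) = 0"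
  unfolding S_B by (subst probB) (auto simp: nn_integral_erlang_density erlang_CDF_at0)


lemma bound_b:
  assumes mu: "0 < \<mu>" and t: "0 \<le> t"
  shows "(\<integral>\<^sup>+\<omega>. ennreal (indicator {\<omega>'. real (kappa X \<mu> t \<omega>') \<ge> 6 * real \<mu> * t} \<omega> * (real (kappa X \<mu> t \<omega>))\<^sup>2) \<partial>M)
    \<le> (\<Sum>j. \<Sum>k. \<integral>\<^sup>+\<omega>. indicator {..(real \<mu> * t)} (S (max (max (Suc j) (Suc k)) (nat \<lceil>6 * real \<mu> * t\<rceil>)) \<omega>) \<partial>M)"
proof -
  have "(\<integral>\<^sup>+\<omega>. ennreal (indicator {\<omega>'. real (kappa X \<mu> t \<omega>') \<ge> 6 * real \<mu> * t} \<omega> * (real (kappa X \<mu> t \<omega>))\<^sup>2) \<partial>M)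
    \<le> (\<integral>\<^sup>+\<omega>. (\<Sum>j. \<Sum>k. indicator {..(real \<mu> * t)} (S (max (max (Suc j) (Suc k)) (nat \<lceil>6 * real \<mu> * t\<rceil>)) \<omega>)) \<partial>M)"
  proof (intro nn_integral_mono_AE, use AE_nonneg in eventually_elim)
    case (elim \<omega>)
    from pw_b[where X=X and \<omega>=\<omega>, OF elim mu t] show ?case by (simp only: S_def ennreal_indicator)
  qed
  also have "\<dots> = (\<Sum>j. \<integral>\<^sup>+\<omega>. (\<Sum>k. indicator {..(real \<mu> * t)} (S (max (max (Suc j) (Suc k)) (nat \<lceil>6 * real \<mu> * t\<rceil>)) \<omega>)) \<partial>M)"
    using measS by (intro nn_integral_suminf) auto
  also have "\<dots> = (\<Sum>j. \<Sum>k. \<integral>\<^sup>+\<omega>. indicator {..(real \<mu> * t)} (S (max (max (Suc j) (Suc k)) (nat \<lceil>6 * real \<mu> * t\<rceil>)) \<omega>) \<partial>M)"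
    using measS by (intro suminf_cong nn_integral_suminf) auto
  finally show ?thesis .
qed

lemma ln2_half: "1 < 2 * ln (2::real)"
proof -
  have "exp 1 < (4::real)" using exp_le by simp
  then have "ln (exp 1) < ln (4::real)" by (subst ln_less_cancel_iff) auto
  also have "ln (4::real) = 2 * ln 2" using ln_realpow[of 2 2] by simp
  finally show ?thesis by simp
qed

lemma part_b:
  assumes t: "0 \<le> t"
  shows "((\<lambda>\<mu>::nat. \<integral>\<^sup>+ \<omega>. ennreal (indicator {\<omega>'. real (kappa X \<mu> t \<omega>') \<ge> 6 * real \<mu> * t} \<omega>
                 * (real (kappa X \<mu> t \<omega>))\<^sup>2) \<partial>M) \<longlongrightarrow> 0) sequentially"
proof (cases "t = 0")
  case True
  show ?thesis
  proof (rule tendsto_eventually, rule eventually_sequentiallyI[of 1])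
    fix \<mu> :: nat assume mu: "1 \<le> \<mu>"
    have "(\<integral>\<^sup>+\<omega>. ennreal (indicator {\<omega>'. real (kappa X \<mu> t \<omega>') \<ge> 6 * real \<mu> * t} \<omega> * (real (kappa X \<mu> t \<omega>))\<^sup>2) \<partial>M)
      \<le> (\<Sum>j. \<Sum>k. \<integral>\<^sup>+\<omega>. indicator {..(real \<mu> * t)} (S (max (max (Suc j) (Suc k)) (nat \<lceil>6 * real \<mu> * t\<rceil>)) \<omega>) \<partial>M)"
      using mu t by (intro bound_b) auto
    also have "\<dots> = 0" using True by (simp add: probS0)
    finally show "(\<integral>\<^sup>+\<omega>. ennreal (indicator {\<omega>'. real (kappa X \<mu> t \<omega>') \<ge> 6 * real \<mu> * t} \<omega> * (real (kappa X \<mu> t \<omega>))\<^sup>2) \<partial>M) = 0"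
      by simp
  qed
next
  case False
  then have tpos: "0 < t" using t by simp
  define \<rho> :: real where "\<rho> = exp (- ln 2 / 3)"
  have rho0: "0 < \<rho>" and rho1: "\<rho> < 1" by (auto simp: \<rho>_def)
  have rho3: "\<rho> ^ 3 = 1/2"
    unfolding \<rho>_def exp_of_nat_mult[symmetric] by (simp add: exp_minus)
  define g where "g = \<rho> / (1 - \<rho>)"
  have gsum: "(\<Sum>j. ennreal (\<rho> ^ Suc j)) = ennreal g"
  proof (rule suminf_ennreal_eq)
    show "(\<lambda>j. \<rho> ^ Suc j) sums g"
      using sums_mult[OF geometric_sums[of \<rho>], of \<rho>] rho0 rho1 by (simp add: g_def)
  qed (use rho0 in auto)
  define q where "q = exp ((1 - 2 * ln 2) * t)"
  have q0: "0 \<le> q" and q1: "q < 1" using ln2_half tpos by (auto simp: q_def mult_neg_pos)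
  have key: "(\<integral>\<^sup>+\<omega>. ennreal (indicator {\<omega>'. real (kappa X \<mu> t \<omega>') \<ge> 6 * real \<mu> * t} \<omega> * (real (kappa X \<mu> t \<omega>))\<^sup>2) \<partial>M)
     \<le> ennreal (q ^ \<mu> * g * g)" if mu: "1 \<le> \<mu>" for \<mu> :: nat
  proof -
    define m where "m = nat \<lceil>6 * real \<mu> * t\<rceil>"
    define A where "A = exp (real \<mu> * t) * \<rho> ^ m"
    have A0: "0 \<le> A" using rho0 by (simp add: A_def)
    have trm: "(\<integral>\<^sup>+\<omega>. indicator {..(real \<mu> * t)} (S (max (max (Suc j) (Suc k)) m) \<omega>) \<partial>M)
       \<le> ennreal (A * \<rho> ^ Suc j) * ennreal (\<rho> ^ Suc k)" for j k
    proof -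
      define n where "n = max (max (Suc j) (Suc k)) m"
      have "(1/2::real)^n = \<rho> ^ (3 * n)" by (simp add: power_mult rho3)
      also have "\<rho> ^ (3 * n) \<le> \<rho> ^ (Suc j + Suc k + m)"
        using rho0 rho1 by (intro power_decreasing) (auto simp: n_def max_def)
      also have "\<rho> ^ (Suc j + Suc k + m) = \<rho> ^ Suc j * \<rho> ^ Suc k * \<rho> ^ m" by (simp add: power_add)
      finally have r0: "(1/2::real)^n \<le> \<rho> ^ Suc j * \<rho> ^ Suc k * \<rho> ^ m" .
      have r: "exp (real \<mu> * t) * (1/2)^n \<le> A * \<rho> ^ Suc j * \<rho> ^ Suc k"
        using mult_left_mono[OF r0, of "exp (real \<mu> * t)"] by (simp add: A_def mult_ac)
      have "(\<integral>\<^sup>+\<omega>. indicator {..(real \<mu> * t)} (S n \<omega>) \<partial>M) \<le> ennreal (exp (real \<mu> * t) * (1/2)^n)"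
        by (rule chernoff)
      also have "\<dots> \<le> ennreal (A * \<rho> ^ Suc j * \<rho> ^ Suc k)" using r by (rule ennreal_leI)
      finally have "(\<integral>\<^sup>+\<omega>. indicator {..(real \<mu> * t)} (S n \<omega>) \<partial>M) \<le> ennreal (A * \<rho> ^ Suc j * \<rho> ^ Suc k)" .
      then show ?thesis using rho0 A0 by (simp add: n_def ennreal_mult[symmetric])
    qed
    have "(\<integral>\<^sup>+\<omega>. ennreal (indicator {\<omega>'. real (kappa X \<mu> t \<omega>') \<ge> 6 * real \<mu> * t} \<omega> * (real (kappa X \<mu> t \<omega>))\<^sup>2) \<partial>M)
      \<le> (\<Sum>j. \<Sum>k. \<integral>\<^sup>+\<omega>. indicator {..(real \<mu> * t)} (S (max (max (Suc j) (Suc k)) m) \<omega>) \<partial>M)"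
      unfolding m_def using mu t by (intro bound_b) auto
    also have "\<dots> \<le> (\<Sum>j. \<Sum>k. ennreal (A * \<rho> ^ Suc j) * ennreal (\<rho> ^ Suc k))"
      by (intro suminf_le summableI trm)
    also have "\<dots> = (\<Sum>j. ennreal (A * \<rho> ^ Suc j) * (\<Sum>k. ennreal (\<rho> ^ Suc k)))"
      by (rule suminf_cong) (rule ennreal_suminf_cmult)
    also have "\<dots> = (\<Sum>j. ennreal (A * \<rho> ^ Suc j)) * ennreal g"
      by (simp only: gsum ennreal_suminf_multc)
    also have "(\<Sum>j. ennreal (A * \<rho> ^ Suc j)) = (\<Sum>j. ennreal A * ennreal (\<rho> ^ Suc j))"
      using A0 rho0 by (intro suminf_cong ennreal_mult) auto
    also have "\<dots> = ennreal A * ennreal g"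
      by (simp only: gsum ennreal_suminf_cmult)
    also have "ennreal A * ennreal g * ennreal g = ennreal (A * g * g)"
    proof -
      have g0: "0 \<le> g" using rho0 rho1 by (simp add: g_def)
      show ?thesis using A0 g0 by (metis ennreal_mult mult_nonneg_nonneg)
    qed
    also have "\<dots> \<le> ennreal (q ^ \<mu> * g * g)"
    proof (intro ennreal_leI mult_right_mono)
      have "\<rho> ^ m = exp (real m * (- ln 2 / 3))" unfolding \<rho>_def exp_of_nat_mult ..
      also have "\<dots> \<le> exp ((6 * real \<mu> * t) * (- ln 2 / 3))"
      proof -
        have mge: "6 * real \<mu> * t \<le> real m" using real_nat_ceiling_ge[of "6 * real \<mu> * t"] by (simp add: m_def)
        have "real m * (- ln 2 / 3) \<le> (6 * real \<mu> * t) * (- ln 2 / 3)"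
          by (rule mult_right_mono_neg[OF mge]) simp
        then show ?thesis by simp
      qed
      finally have "A \<le> exp (real \<mu> * t) * exp ((6 * real \<mu> * t) * (- ln 2 / 3))"
        unfolding A_def by (intro mult_left_mono) auto
      also have "\<dots> = exp (real \<mu> * ((1 - 2 * ln 2) * t))"
        by (simp add: exp_add[symmetric] algebra_simps)
      also have "\<dots> = q ^ \<mu>" unfolding q_def by (rule exp_of_nat_mult)
      finally show "A \<le> q ^ \<mu>" .
    qed (use rho0 rho1 in \<open>auto simp: g_def\<close>)
    finally show ?thesis .
  qed
  have lim: "((\<lambda>\<mu>::nat. ennreal (q ^ \<mu> * g * g)) \<longlongrightarrow> 0) sequentially"
  proof -
    have "((\<lambda>\<mu>::nat. q ^ \<mu> * g * g) \<longlongrightarrow> 0 * g * g) sequentially"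
      using q0 q1 by (intro tendsto_intros) auto
    then have "((\<lambda>\<mu>::nat. ennreal (q ^ \<mu> * g * g)) \<longlongrightarrow> ennreal (0 * g * g)) sequentially"
      by (rule tendsto_ennrealI)
    then show ?thesis by simp
  qed
  show ?thesis
    by (rule tendsto_sandwich[OF _ _ tendsto_const lim])
       (auto intro!: eventually_sequentiallyI[of 1] key)
qed


lemma final_arith:
  fixes h \<mu> :: real assumes h: "0 \<le> h" and mu: "1 \<le> \<mu>"
  shows "(8*(\<mu>*h) + 8*(\<mu>*h)\<^sup>2) / \<mu>\<^sup>2 \<le> 16 * (sqrt h + h\<^sup>2)"
proof -
  have mu0: "0 < \<mu>" using mu by simp
  have e: "(8*(\<mu>*h) + 8*(\<mu>*h)\<^sup>2) / \<mu>\<^sup>2 = 8 * (h / \<mu>) + 8 * h\<^sup>2"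
    using mu0 by (simp add: field_simps power2_eq_square)
  have "h / \<mu> \<le> h" using h mu by (simp add: divide_le_eq mult_le_cancel_left1 mult_left_mono[of 1 \<mu> h, simplified])
  moreover have "h \<le> sqrt h + h\<^sup>2"
  proof (cases "h \<le> 1")
    case True
    have "h = sqrt h * sqrt h" using h by simp
    also have "\<dots> \<le> sqrt h * 1" using True h by (intro mult_left_mono) auto
    finally have "h \<le> sqrt h" by simp
    moreover have "0 \<le> h\<^sup>2" by simp
    ultimately show ?thesis by linarith
  next
    case False
    then have "h \<le> h\<^sup>2" by (simp add: power2_eq_square)
    moreover have "0 \<le> sqrt h" using h by simp
    ultimately show ?thesis by linarith
  qed
  moreover have "0 \<le> sqrt h" using h by simp
  moreover have "0 \<le> h\<^sup>2" by simp
  ultimately have "h / \<mu> \<le> sqrt h + h\<^sup>2" "0 \<le> sqrt h" "0 \<le> h\<^sup>2" by linarith+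
  moreover have "\<And>x y z :: real. x \<le> y + z \<Longrightarrow> 0 \<le> y \<Longrightarrow> 0 \<le> z \<Longrightarrow> 8*x + 8*z \<le> 16*(y+z)" by (simp add: algebra_simps)
  ultimately show ?thesis unfolding e by blast
qed

lemma part_a:
  "\<exists>C::real. \<forall>\<mu>::nat. \<forall>s t::real. \<mu> > 0 \<longrightarrow> 0 \<le> s \<longrightarrow> s \<le> t \<longrightarrow>
            ennreal (1 / (real \<mu>)\<^sup>2) *
              (\<integral>\<^sup>+ \<omega>. ennreal (\<bar>real (kappa X \<mu> t \<omega>) - real (kappa X \<mu> s \<omega>)\<bar> *
                  (\<Sum>k\<in>{kappa X \<mu> s \<omega>..<kappa X \<mu> t \<omega>}. (X (k + 1) \<omega>)\<^sup>2)) \<partial>M)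
            \<le> ennreal (C * (sqrt \<bar>t - s\<bar> + \<bar>t - s\<bar>\<^sup>2))"
proof (intro exI[of _ 16] allI impI)
  fix \<mu> :: nat and s t :: real
  assume mu: "\<mu> > 0" and s: "0 \<le> s" and st: "s \<le> t"
  show "ennreal (1 / (real \<mu>)\<^sup>2) *
              (\<integral>\<^sup>+ \<omega>. ennreal (\<bar>real (kappa X \<mu> t \<omega>) - real (kappa X \<mu> s \<omega>)\<bar> *
                  (\<Sum>k\<in>{kappa X \<mu> s \<omega>..<kappa X \<mu> t \<omega>}. (X (k + 1) \<omega>)\<^sup>2)) \<partial>M)
            \<le> ennreal (16 * (sqrt \<bar>t - s\<bar> + \<bar>t - s\<bar>\<^sup>2))"
  proof (cases "s = t")
    case True
    then show ?thesis by simp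
  next
    case False
    then have st': "s < t" using st by simp
    define a where "a = real \<mu> * s"
    define b where "b = real \<mu> * t"
    have ab: "0 \<le> a" "a < b" using s st' mu by (auto simp: a_def b_def)
    have "(\<integral>\<^sup>+ \<omega>. ennreal (\<bar>real (kappa X \<mu> t \<omega>) - real (kappa X \<mu> s \<omega>)\<bar> *
                  (\<Sum>k\<in>{kappa X \<mu> s \<omega>..<kappa X \<mu> t \<omega>}. (X (k + 1) \<omega>)\<^sup>2)) \<partial>M)
      \<le> (\<integral>\<^sup>+\<omega>. (\<Sum>k. \<Sum>j. ennreal (indicator {a<..b} (S (Suc k) \<omega>) * indicator {a<..b} (S (Suc j) \<omega>) * (X (Suc k) \<omega>)\<^sup>2)) \<partial>M)"
    proof (intro nn_integral_mono_AE, use AE_nonneg in eventually_elim)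
      case (elim \<omega>)
      from pw_a[where X=X and \<omega>=\<omega>, OF elim mu s st] show ?case by (simp only: S_def a_def b_def)
    qed
    also have "\<dots> = (\<Sum>k. \<integral>\<^sup>+\<omega>. (\<Sum>j. ennreal (indicator {a<..b} (S (Suc k) \<omega>) * indicator {a<..b} (S (Suc j) \<omega>) * (X (Suc k) \<omega>)\<^sup>2)) \<partial>M)"
      using measS measX by (intro nn_integral_suminf) auto
    also have "\<dots> = (\<Sum>k. \<Sum>j. \<integral>\<^sup>+\<omega>. ennreal (indicator {a<..b} (S (Suc k) \<omega>) * indicator {a<..b} (S (Suc j) \<omega>) * (X (Suc k) \<omega>)\<^sup>2) \<partial>M)"
      using measS measX by (intro suminf_cong nn_integral_suminf) auto
    also have "\<dots> \<le> ennreal (8*(b-a) + 8*(b-a)\<^sup>2)" by (rule main_a[OF ab])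
    finally have I: "(\<integral>\<^sup>+ \<omega>. ennreal (\<bar>real (kappa X \<mu> t \<omega>) - real (kappa X \<mu> s \<omega>)\<bar> *
                  (\<Sum>k\<in>{kappa X \<mu> s \<omega>..<kappa X \<mu> t \<omega>}. (X (k + 1) \<omega>)\<^sup>2)) \<partial>M) \<le> ennreal (8*(b-a) + 8*(b-a)\<^sup>2)" .
    have "ennreal (1 / (real \<mu>)\<^sup>2) * (\<integral>\<^sup>+ \<omega>. ennreal (\<bar>real (kappa X \<mu> t \<omega>) - real (kappa X \<mu> s \<omega>)\<bar> *
                  (\<Sum>k\<in>{kappa X \<mu> s \<omega>..<kappa X \<mu> t \<omega>}. (X (k + 1) \<omega>)\<^sup>2)) \<partial>M)
       \<le> ennreal (1 / (real \<mu>)\<^sup>2) * ennreal (8*(b-a) + 8*(b-a)\<^sup>2)"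
      by (rule mult_left_mono[OF I]) simp
    also have "\<dots> = ennreal ((8*(b-a) + 8*(b-a)\<^sup>2) / (real \<mu>)\<^sup>2)"
      using ab by (subst ennreal_mult[symmetric]) auto
    also have "\<dots> \<le> ennreal (16 * (sqrt \<bar>t - s\<bar> + \<bar>t - s\<bar>\<^sup>2))"
    proof (rule ennreal_leI)
      have "b - a = real \<mu> * (t - s)" by (simp add: a_def b_def algebra_simps)
      then show "(8*(b-a) + 8*(b-a)\<^sup>2) / (real \<mu>)\<^sup>2 \<le> 16 * (sqrt \<bar>t - s\<bar> + \<bar>t - s\<bar>\<^sup>2)"
        using final_arith[of "t - s" "real \<mu>"] st mu by simp
    qed
    finally show ?thesis .
  qed
qed

end

theorem lemma3p3:
  fixes M :: "'a measure" and X :: "nat \<Rightarrow> 'a \<Rightarrow> real"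
  assumes "prob_space M"
    and "prob_space.indep_vars M (\<lambda>_. borel) X {1..}"
    and "\<And>i. i \<ge> 1 \<Longrightarrow> distributed M lborel (X i) (exponential_density 1)"
  shows "(\<exists>C::real. \<forall>\<mu>::nat. \<forall>s t::real. \<mu> > 0 \<longrightarrow> 0 \<le> s \<longrightarrow> s \<le> t \<longrightarrow>
            ennreal (1 / (real \<mu>)\<^sup>2) *
              (\<integral>\<^sup>+ \<omega>. ennreal (\<bar>real (kappa X \<mu> t \<omega>) - real (kappa X \<mu> s \<omega>)\<bar> *
                  (\<Sum>k\<in>{kappa X \<mu> s \<omega>..<kappa X \<mu> t \<omega>}. (X (k + 1) \<omega>)\<^sup>2)) \<partial>M)
            \<le> ennreal (C * (sqrt \<bar>t - s\<bar> + \<bar>t - s\<bar>\<^sup>2)))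
       \<and> (\<forall>t::real. t \<ge> 0 \<longrightarrow>
            ((\<lambda>\<mu>::nat. \<integral>\<^sup>+ \<omega>. ennreal (indicator {\<omega>'. real (kappa X \<mu> t \<omega>') \<ge> 6 * real \<mu> * t} \<omega>
                 * (real (kappa X \<mu> t \<omega>))\<^sup>2) \<partial>M) \<longlongrightarrow> 0) sequentially)"
proof -
  interpret E: expseq M X
    using assms unfolding expseq_def expseq_axioms_def by auto
  show ?thesis using E.part_a E.part_b by blast
qed

end
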